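(* Let $k \ge 1$ and $m \in \{4k+3, 4k+5\}$, $\theta = 2\pi/m$. Then the $\theta_m$-graph on any finite point set in general position is a $\dfrac{\cos(\theta/4)}{\cos(\theta/2) - \sin(3\theta/4)}$-spanner.
   Context: Cones: for $m \ge 2$, $\theta = 2\pi/m$; around each point $u$ draw $m$ rays with consecutive angular separation $\theta$, oriented so the vertical upward ray from $u$ bisects a cone $C_0^u$; cones numbered clockwise, same orientation at every point. General position: no two points on a line parallel to a cone boundary ray, no two on a line perpendicular to a cone bisector, no three collinear. The $\theta_m$-graph on $P$: for each $u\in P$ and each cone $C_i^u$ containing another point of $P$, add an edge from $u$ to the point of $C_i^u$ whose orthogonal projection onto the bisector of $C_i^u$ is closest to $u$; edges weighted by Euclidean length. A graph $H$ on $P$ is a $t$-spanner if $\delta_H(u,w)\le t|uw|$ for all $u,w\in P$. *)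

theory Defs
  imports "HOL-Analysis.Analysis"
begin

type_synonym point = "real \<times> real"

definition theta :: "nat \<Rightarrow> real" where
  "theta m = 2 * pi / real m"

text \<open>Cone i at u (i < m): directions whose clockwise angle from the upward vertical
  lies in [(i - 1/2) theta, (i + 1/2) theta). Cone 0 is bisected by the upward ray;
  cones are numbered clockwise. Direction at clockwise angle phi is (sin phi, cos phi).\<close>
definition in_cone :: "nat \<Rightarrow> point \<Rightarrow> nat \<Rightarrow> point \<Rightarrow> bool" where
  "in_cone m u i v \<longleftrightarrow>
     (\<exists>r phi. r > 0 \<and> (real i - 1/2) * theta m \<le> phi \<and> phi < (real i + 1/2) * theta m \<and>
        v = (fst u + r * sin phi, snd u + r * cos phi))"

text \<open>Signed length of the orthogonal projection of v - u onto the bisector of cone i.\<close>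
definition bis_proj :: "nat \<Rightarrow> point \<Rightarrow> nat \<Rightarrow> point \<Rightarrow> real" where
  "bis_proj m u i v = (fst v - fst u) * sin (real i * theta m) + (snd v - snd u) * cos (real i * theta m)"

definition theta_arc :: "nat \<Rightarrow> point set \<Rightarrow> point \<Rightarrow> point \<Rightarrow> bool" where
  "theta_arc m P u v \<longleftrightarrow> u \<in> P \<and> v \<in> P \<and>
     (\<exists>i<m. in_cone m u i v \<and> (\<forall>w\<in>P. in_cone m u i w \<longrightarrow> bis_proj m u i v \<le> bis_proj m u i w))"

definition theta_graph :: "nat \<Rightarrow> point set \<Rightarrow> point \<Rightarrow> point \<Rightarrow> bool" where
  "theta_graph m P u v \<longleftrightarrow> theta_arc m P u v \<or> theta_arc m P v u"

definition general_position :: "nat \<Rightarrow> point set \<Rightarrow> bool" where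
  "general_position m P \<longleftrightarrow>
     (\<forall>p\<in>P. \<forall>q\<in>P. p \<noteq> q \<longrightarrow>
        (\<forall>j<m. (fst p - fst q) * cos ((2 * real j + 1) * theta m / 2)
               - (snd p - snd q) * sin ((2 * real j + 1) * theta m / 2) \<noteq> 0) \<and>
        (\<forall>i<m. (fst p - fst q) * sin (real i * theta m)
               + (snd p - snd q) * cos (real i * theta m) \<noteq> 0)) \<and>
     (\<forall>p\<in>P. \<forall>q\<in>P. \<forall>r\<in>P. p \<noteq> q \<and> q \<noteq> r \<and> p \<noteq> r \<longrightarrow>
        (fst q - fst p) * (snd r - snd p) - (snd q - snd p) * (fst r - fst p) \<noteq> 0)"

definition is_spanner :: "(point \<Rightarrow> point \<Rightarrow> bool) \<Rightarrow> point set \<Rightarrow> real \<Rightarrow> bool" where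
  "is_spanner H P t \<longleftrightarrow>
     (\<forall>u\<in>P. \<forall>w\<in>P. \<exists>xs. xs \<noteq> [] \<and> hd xs = u \<and> last xs = w \<and>
        (\<forall>j < length xs - 1. H (xs ! j) (xs ! Suc j)) \<and>
        (\<Sum>j < length xs - 1. dist (xs ! j) (xs ! Suc j)) \<le> t * dist u w)"

end

theory Submission
  imports Defs
begin


lemma alg_key:
  fixes x y a b S2 C2 S4 C4 t :: real
  assumes C2: "C2 > 0" and S2: "S2 \<ge> 0" and C4: "C4 > 0" and S4: "S4 \<ge> 0" and S4l: "S4 < 1"
    and p2: "S2^2 + C2^2 = 1" and p4: "S4^2 + C4^2 = 1"
    and tp: "t > 0" and key: "C4 + t * (S4 * C2 + S2 * C4) \<le> t * C2"
    and y: "y > 0" and hx: "\<bar>x\<bar> * C4 \<le> y * S4"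
    and b: "0 < b" "b \<le> y" and ha: "\<bar>a\<bar> * C2 \<le> b * S2"
  shows "sqrt (a^2 + b^2) + t * sqrt ((x - a)^2 + (y - b)^2) \<le> t * sqrt (x^2 + y^2)"
proof -
  define N where "N = sqrt (x^2 + y^2)"
  have h1: "sqrt (a^2 + b^2) \<le> b / C2"
  proof -
    have "(a^2) * C2^2 \<le> b^2 * S2^2"
    proof -
      have "(\<bar>a\<bar> * C2)^2 \<le> (b * S2)^2" using ha C2 by (intro power_mono) auto
      thus ?thesis by (simp add: power_mult_distrib)
    qed
    moreover have "b^2 = b^2 * S2^2 + b^2 * C2^2" using p2 by (metis distrib_left mult.right_neutral)
    moreover have "(a^2 + b^2) * C2^2 = a^2 * C2^2 + b^2 * C2^2" by (simp add: algebra_simps)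
    ultimately have "(a^2 + b^2) * C2^2 \<le> b^2" by linarith
    hence "a^2 + b^2 \<le> (b / C2)^2" using C2 by (simp add: power_divide field_simps)
    hence "sqrt (a^2 + b^2) \<le> sqrt ((b/C2)^2)" by (rule real_sqrt_le_mono)
    thus ?thesis using b C2 by simp
  qed
  define l where "l = b / y"
  define q where "q = a * y / b"
  have l01: "0 < l" "l \<le> 1" using b y by (auto simp: l_def)
  have dec: "(x - a, y - b) = l *\<^sub>R (x - q, 0::real) + (1 - l) *\<^sub>R (x, y)"
    using b y by (simp add: l_def q_def field_simps)
  have h2: "sqrt ((x - a)^2 + (y - b)^2) \<le> l * \<bar>x - q\<bar> + (1 - l) * N"
  proof -
    have "norm (x - a, y - b) \<le> norm (l *\<^sub>R (x - q, 0::real)) + norm ((1 - l) *\<^sub>R (x, y))"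
      unfolding dec by (rule norm_triangle_ineq)
    also have "\<dots> = l * \<bar>x - q\<bar> + (1 - l) * N"
    proof -
      have "norm (l *\<^sub>R (x - q, 0::real)) = l * \<bar>x - q\<bar>"
        using l01 by (simp add: norm_Pair abs_mult)
      moreover have "norm ((1 - l) *\<^sub>R (x, y)) = (1 - l) * N"
        unfolding norm_scaleR using l01 by (simp add: norm_Pair N_def)
      ultimately show ?thesis by simp
    qed
    finally show ?thesis by (simp add: norm_Pair)
  qed
  have hq: "\<bar>q\<bar> * C2 \<le> y * S2"
  proof -
    have "\<bar>q\<bar> = \<bar>a\<bar> * y / b" using b y by (simp add: q_def abs_mult)
    hence "\<bar>q\<bar> * C2 = (\<bar>a\<bar> * C2) * y / b" by simp
    also have "\<dots> \<le> (b * S2) * y / b" using ha y b by (intro divide_right_mono mult_right_mono) auto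
    also have "\<dots> = y * S2" using b by simp
    finally show ?thesis .
  qed
  have key3: "y / C2 + t * \<bar>x\<bar> + t * (y * S2 / C2) \<le> t * N"
  proof -
    define X where "X = \<bar>x\<bar>"
    define k where "k = y * S4 / C4"
    define M where "M = sqrt (k^2 + y^2)"
    have Xk: "X \<le> k" "0 \<le> X" using hx C4 by (auto simp: X_def k_def field_simps)
    have NX: "N = sqrt (X^2 + y^2)" by (simp add: N_def X_def)
    have M: "M = y / C4"
    proof -
      have "k^2 + y^2 = y^2 * (S4^2 + C4^2) / C4^2" using C4 by (simp add: k_def power_divide power_mult_distrib field_simps)
      also have "\<dots> = (y / C4)^2" using p4 by (simp add: power_divide)
      finally have "k^2 + y^2 = (y / C4)^2" .
      thus ?thesis using y C4 by (simp add: M_def)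
    qed
    have Npos: "N > 0" using y by (simp add: N_def add_nonneg_pos)
    have NXle: "N + X \<le> M + k" using Xk unfolding NX M_def
      by (intro add_mono real_sqrt_le_mono) (auto intro: power_mono)
    have e1: "(N - X) * (N + X) = y^2" using Xk by (simp add: NX algebra_simps power2_eq_square[symmetric])
    have e2: "(M - k) * (M + k) = y^2" unfolding M_def by (simp add: algebra_simps power2_eq_square[symmetric])
    have pos1: "N + X > 0" using Npos Xk by simp
    have "M - k = y^2 / (M + k)" using e2 pos1 NXle by (simp add: field_simps)
    also have "\<dots> \<le> y^2 / (N + X)" using pos1 NXle by (intro divide_left_mono) auto
    also have "\<dots> = N - X" using e1 pos1 by (simp add: field_simps)
    finally have NmX: "M - k \<le> N - X" .
    have "y / C2 + t * (y * S2 / C2) \<le> t * (M - k)"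
    proof -
      have "y * (C4 + t * (S4 * C2 + S2 * C4)) \<le> y * (t * C2)" using key y by (intro mult_left_mono) auto
      hence "y * C4 + t * y * S2 * C4 \<le> t * C2 * y * (1 - S4)" by (simp add: algebra_simps)
      thus ?thesis using C2 C4 by (simp add: M k_def field_simps)
    qed
    also have "\<dots> \<le> t * (N - X)" using NmX tp by simp
    finally show ?thesis by (simp add: X_def algebra_simps)
  qed
  have "sqrt (a^2 + b^2) + t * sqrt ((x - a)^2 + (y - b)^2) \<le> b / C2 + t * (l * \<bar>x - q\<bar> + (1 - l) * N)"
    using h1 h2 tp by (intro add_mono mult_left_mono) auto
  also have "\<dots> \<le> b / C2 + t * (l * (\<bar>x\<bar> + y * S2 / C2) + (1 - l) * N)"
  proof -
    have "\<bar>q\<bar> \<le> y * S2 / C2" using hq C2 by (simp add: field_simps)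
    moreover have "\<bar>x - q\<bar> \<le> \<bar>x\<bar> + \<bar>q\<bar>" by (rule abs_triangle_ineq4)
    ultimately have "\<bar>x - q\<bar> \<le> \<bar>x\<bar> + y * S2 / C2" by linarith
    thus ?thesis using tp l01 by (intro add_mono mult_left_mono order_refl) auto
  qed
  also have "\<dots> = l * (y / C2 + t * \<bar>x\<bar> + t * (y * S2 / C2)) + (1 - l) * (t * N)"
    using y by (simp add: l_def field_simps)
  also have "\<dots> \<le> l * (t * N) + (1 - l) * (t * N)"
    using key3 l01 tp by (intro add_mono mult_left_mono) auto
  also have "\<dots> = t * N" by (simp add: algebra_simps)
  finally show ?thesis by (simp add: N_def)
qed



definition tc :: "real \<Rightarrow> real" where
  "tc th = cos (th / 4) / (cos (th / 2) - sin (3 * th / 4))"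

lemma cone_half:
  fixes p c :: real
  assumes "\<bar>p\<bar> \<le> c" "c < pi / 2"
  shows "\<bar>sin p\<bar> * cos c \<le> cos p * sin c" and "cos p > 0"
proof -
  have c0: "0 \<le> c" using assms by linarith
  have g: "\<bar>sin p\<bar> = sin \<bar>p\<bar> \<and> cos p = cos \<bar>p\<bar>"
  proof (cases "p \<ge> 0")
    case True
    then have "sin p \<ge> 0" using assms by (intro sin_ge_zero) auto
    then show ?thesis using True by (simp add: abs_of_nonneg)
  next
    case False
    then have "sin (-p) \<ge> 0" using assms by (intro sin_ge_zero) auto
    then show ?thesis using False by (simp add: abs_of_neg)
  qed
  have "0 \<le> sin (c - \<bar>p\<bar>)" using assms c0 by (intro sin_ge_zero) auto
  also have "sin (c - \<bar>p\<bar>) = cos p * sin c - \<bar>sin p\<bar> * cos c"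
    using g by (simp only: sin_diff) (simp add: mult.commute)
  finally show "\<bar>sin p\<bar> * cos c \<le> cos p * sin c" by simp
  show "cos p > 0" using assms by (intro cos_gt_zero_pi) auto
qed

lemma tc_facts:
  fixes th :: real
  assumes "0 < th" "th \<le> 2 * pi / 7"
  shows "cos (th/4) + tc th * (sin (th/4) * cos (th/2) + sin (th/2) * cos (th/4)) \<le> tc th * cos (th/2)"
    and "tc th \<ge> 1"
proof -
  have s34: "sin (3 * th / 4) = sin (th/4) * cos (th/2) + sin (th/2) * cos (th/4)"
    using sin_add[of "th/4" "th/2"] by (simp add: algebra_simps)
  have lt: "sin (3 * th / 4) < cos (th / 2)"
  proof -
    have "cos (th/2) = sin (pi/2 - th/2)" by (simp add: sin_cos_eq)
    moreover have "sin (3 * th / 4) < sin (pi/2 - th/2)"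
      using assms pi_gt_zero by (intro sin_monotone_2pi) (auto simp: field_simps)
    ultimately show ?thesis by simp
  qed
  have D: "cos (th / 2) - sin (3 * th / 4) > 0" using lt by simp
  have "tc th * (cos (th / 2) - sin (3 * th / 4)) = cos (th/4)" using D by (simp add: tc_def)
  then show "cos (th/4) + tc th * (sin (th/4) * cos (th/2) + sin (th/2) * cos (th/4)) \<le> tc th * cos (th/2)"
    using s34 by (simp add: algebra_simps)
  have c4: "cos (th/2) \<le> cos (th/4)" using assms by (intro cos_monotone_0_pi_le) (auto simp: field_simps)
  have "sin (3 * th / 4) \<ge> 0" using assms by (intro sin_ge_zero) (auto simp: field_simps)
  then have "cos (th / 2) - sin (3 * th / 4) \<le> cos (th/4)" using c4 by linarith
  then show "tc th \<ge> 1" using D by (simp add: tc_def field_simps)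
qed

lemma dist_polar:
  fixes u :: "real \<times> real"
  shows "dist (fst u + r * sin p, snd u + r * cos p) (fst u + R * sin q, snd u + R * cos q)
       = sqrt (r^2 + R^2 - 2 * r * R * cos (p - q))"
proof -
  have "(r * sin p - R * sin q)^2 + (r * cos p - R * cos q)^2
      = r^2 * ((sin p)^2 + (cos p)^2) + R^2 * ((sin q)^2 + (cos q)^2) - 2 * r * R * cos (p - q)"
    by (simp only: cos_diff power2_eq_square, algebra)
  then show ?thesis by (simp add: dist_Pair_Pair dist_real_def)
qed

lemma dist_polar0:
  fixes u :: "real \<times> real"
  assumes "r \<ge> 0"
  shows "dist u (fst u + r * sin p, snd u + r * cos p) = r"
proof -
  have "(r * sin p)^2 + (r * cos p)^2 = r^2" by (simp add: power_mult_distrib flip: distrib_left)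
  moreover obtain u1 u2 where "u = (u1, u2)" by fastforce
  ultimately show ?thesis using assms by (simp add: dist_Pair_Pair dist_real_def)
qed

lemma step_ineq:
  fixes u :: "real \<times> real" and th beta r R ps ph :: real
  assumes th: "0 < th" "th \<le> 2 * pi / 7"
    and r: "r > 0" and R: "R > 0"
    and ps: "\<bar>ps - beta\<bar> \<le> th / 2" and ph: "\<bar>ph - beta\<bar> \<le> th / 4"
    and proj: "r * cos (ps - beta) \<le> R * cos (ph - beta)"
    and v: "v = (fst u + r * sin ps, snd u + r * cos ps)"
    and w: "w = (fst u + R * sin ph, snd u + R * cos ph)"
  shows "dist u v + tc th * dist v w \<le> tc th * dist u w"
proof -
  define a where "a = r * sin (ps - beta)"
  define b where "b = r * cos (ps - beta)"
  define x where "x = R * sin (ph - beta)"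
  define y where "y = R * cos (ph - beta)"
  have pi7: "2 * pi / 7 < pi / 2" using pi_gt_zero by simp
  have c2: "\<bar>sin (ps - beta)\<bar> * cos (th/2) \<le> cos (ps - beta) * sin (th/2)" "cos (ps - beta) > 0"
    using cone_half[of "ps - beta" "th/2"] ps th pi7 by auto
  have c4: "\<bar>sin (ph - beta)\<bar> * cos (th/4) \<le> cos (ph - beta) * sin (th/4)" "cos (ph - beta) > 0"
    using cone_half[of "ph - beta" "th/4"] ph th pi7 by auto
  have C2: "cos (th/2) > 0" using th pi7 by (intro cos_gt_zero_pi) auto
  have C4: "cos (th/4) > 0" using th pi7 by (intro cos_gt_zero_pi) auto
  have S2: "sin (th/2) \<ge> 0" using th pi7 by (intro sin_ge_zero) auto
  have S4: "sin (th/4) \<ge> 0" using th pi7 by (intro sin_ge_zero) auto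
  have S4l: "sin (th/4) < 1"
  proof -
    have "sin (th/4) < sin (pi/2)" using th pi7 by (intro sin_monotone_2pi) auto
    then show ?thesis by simp
  qed
  have tf: "cos (th/4) + tc th * (sin (th/4) * cos (th/2) + sin (th/2) * cos (th/4)) \<le> tc th * cos (th/2)"
    "tc th \<ge> 1" using tc_facts[OF th] by auto
  have y: "y > 0" using R c4 by (simp add: y_def)
  have hx: "\<bar>x\<bar> * cos (th/4) \<le> y * sin (th/4)"
    using c4 R by (simp add: x_def y_def abs_mult mult.assoc mult_left_mono)
  have b: "0 < b" "b \<le> y" using r c2 proj by (auto simp: b_def y_def)
  have ha: "\<bar>a\<bar> * cos (th/2) \<le> b * sin (th/2)"
    using c2 r by (simp add: a_def b_def abs_mult mult.assoc mult_left_mono)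
  have main: "sqrt (a^2 + b^2) + tc th * sqrt ((x - a)^2 + (y - b)^2) \<le> tc th * sqrt (x^2 + y^2)"
    by (rule alg_key[OF C2 S2 C4 S4 S4l _ _ _ tf(1) y hx b ha]) (use tf(2) in auto)
  have e1: "sqrt (a^2 + b^2) = r"
  proof -
    have "a^2 + b^2 = r^2" by (simp add: a_def b_def power_mult_distrib flip: distrib_left)
    then show ?thesis using r by simp
  qed
  have e2: "sqrt (x^2 + y^2) = R"
  proof -
    have "x^2 + y^2 = R^2" by (simp add: x_def y_def power_mult_distrib flip: distrib_left)
    then show ?thesis using R by simp
  qed
  have e3: "sqrt ((x - a)^2 + (y - b)^2) = sqrt (r^2 + R^2 - 2 * r * R * cos (ps - ph))"
  proof -
    have cd: "cos (ps - ph) = cos ((ps - beta) - (ph - beta))" by simp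
    have "(x - a)^2 + (y - b)^2 = r^2 * ((sin (ps - beta))^2 + (cos (ps - beta))^2)
        + R^2 * ((sin (ph - beta))^2 + (cos (ph - beta))^2) - 2 * r * R * cos ((ps - beta) - (ph - beta))"
      unfolding a_def b_def x_def y_def by (simp only: cos_diff[of "ps - beta"] power2_eq_square, algebra)
    moreover have eq: "ps - beta - (ph - beta) = ps - ph" by simp
    ultimately have "(x - a)^2 + (y - b)^2 = r^2 + R^2 - 2 * r * R * cos (ps - ph)"
      by (simp only: sin_cos_squared_add mult_1_right)
    then show ?thesis by (simp only:)
  qed
  have d1: "dist u v = r" unfolding v by (rule dist_polar0) (use r in simp)
  have d2: "dist u w = R" unfolding w by (rule dist_polar0) (use R in simp)
  have d3: "dist v w = sqrt (r^2 + R^2 - 2 * r * R * cos (ps - ph))" unfolding v w by (rule dist_polar)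
  have m2: "r + tc th * sqrt (r^2 + R^2 - 2 * r * R * cos (ps - ph)) \<le> tc th * R"
    using main by (simp only: e1 e2 e3)
  show ?thesis unfolding d1 d2 d3 by (rule m2)
qed



fun wk :: "(point \<Rightarrow> point \<Rightarrow> bool) \<Rightarrow> point list \<Rightarrow> bool" where
  "wk H (x # y # zs) = (H x y \<and> wk H (y # zs))"
| "wk H _ = True"

fun wl :: "point list \<Rightarrow> real" where
  "wl (x # y # zs) = dist x y + wl (y # zs)"
| "wl _ = 0"

lemma wk_iff: "wk H xs = (\<forall>j < length xs - 1. H (xs ! j) (xs ! Suc j))"
proof (induction H xs rule: wk.induct)
  case (1 H x y zs)
  have "(\<forall>j < length (x # y # zs) - 1. H ((x # y # zs) ! j) ((x # y # zs) ! Suc j))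
      = (H x y \<and> (\<forall>j < length (y # zs) - 1. H ((y # zs) ! j) ((y # zs) ! Suc j)))"
    by (simp only: length_Cons diff_Suc_1 All_less_Suc2) simp
  then show ?case using 1 by simp
qed auto

lemma wl_eq: "wl xs = (\<Sum>j < length xs - 1. dist (xs ! j) (xs ! Suc j))"
proof (induction xs rule: wl.induct)
  case (1 x y zs)
  have "(\<Sum>j < length (x # y # zs) - 1. dist ((x # y # zs) ! j) ((x # y # zs) ! Suc j))
      = dist x y + (\<Sum>j < length (y # zs) - 1. dist ((y # zs) ! j) ((y # zs) ! Suc j))"
    by (simp only: length_Cons diff_Suc_1 sum.lessThan_Suc_shift) simp
  then show ?case using 1 by simp
qed auto

lemma wk_snoc: "xs \<noteq> [] \<Longrightarrow> wk H xs \<Longrightarrow> H (last xs) c \<Longrightarrow> wk H (xs @ [c])"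
  by (induction H xs rule: wk.induct) auto

lemma wl_snoc: "xs \<noteq> [] \<Longrightarrow> wl (xs @ [c]) = wl xs + dist (last xs) c"
  by (induction xs rule: wl.induct) auto

lemma polar_exists:
  fixes u w :: point
  assumes "u \<noteq> w"
  shows "\<exists>R ph. R > 0 \<and> w = (fst u + R * sin ph, snd u + R * cos ph)"
proof -
  define dx where "dx = fst w - fst u"
  define dy where "dy = snd w - snd u"
  define R where "R = sqrt (dx^2 + dy^2)"
  have nz: "dx \<noteq> 0 \<or> dy \<noteq> 0" using assms by (auto simp: dx_def dy_def prod_eq_iff)
  have "dx^2 + dy^2 > 0" using nz by (auto simp: add_pos_nonneg add_nonneg_pos)
  then have R: "R > 0" by (simp add: R_def)
  have RR: "R^2 = dx^2 + dy^2" unfolding R_def by (simp add: add_nonneg_nonneg)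
  have "(dy / R)^2 + (dx / R)^2 = (dx^2 + dy^2) / R^2" by (simp add: power_divide add_divide_distrib)
  also have "\<dots> = 1" using RR R by (metis divide_self power_not_zero less_irrefl)
  finally have "(dy / R)^2 + (dx / R)^2 = 1" .
  then obtain t where t: "dy / R = cos t" "dx / R = sin t" by (rule sincos_total_2pi) auto
  have "w = (fst u + R * sin t, snd u + R * cos t)"
    using t R by (simp add: prod_eq_iff dx_def dy_def field_simps flip: t)
  then show ?thesis using R by blast
qed

lemma sc_shift:
  fixes x :: real and n :: int
  shows "sin (x - 2 * pi * real_of_int n) = sin x" "cos (x - 2 * pi * real_of_int n) = cos x"
  using sin_int_2pin[of n] cos_int_2pin[of n] by (simp_all add: sin_diff cos_diff)

lemma theta_pos: "m > 0 \<Longrightarrow> theta m > 0"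
  by (simp add: theta_def)

lemma theta_mul: "m > 0 \<Longrightarrow> real m * theta m = 2 * pi"
  by (simp add: theta_def)

lemma cone_of_angle:
  assumes m: "m > 0"
  shows "\<exists>i<m. \<exists>ph'. (real i - 1/2) * theta m \<le> ph' \<and> ph' < (real i + 1/2) * theta m \<and>
           sin ph' = sin ph \<and> cos ph' = cos ph"
proof -
  define th where "th = theta m"
  have th: "th > 0" "real m * th = 2 * pi" using theta_pos[OF m] theta_mul[OF m] by (auto simp: th_def)
  define n where "n = \<lfloor>(ph + th/2) / (2 * pi)\<rfloor>"
  define ph1 where "ph1 = ph - 2 * pi * real_of_int n"
  have n1: "real_of_int n \<le> (ph + th/2) / (2 * pi)" "(ph + th/2) / (2 * pi) < real_of_int n + 1"
    unfolding n_def by linarith+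
  have a1: "0 \<le> ph1 + th/2"
  proof -
    have "2 * pi * real_of_int n \<le> ph + th/2" using n1(1) pi_gt_zero by (simp add: field_simps)
    then show ?thesis by (simp add: ph1_def)
  qed
  have a2: "ph1 + th/2 < 2 * pi"
  proof -
    have "ph + th/2 < 2 * pi * (real_of_int n + 1)" using n1(2) pi_gt_zero by (simp add: field_simps)
    then show ?thesis by (simp add: ph1_def algebra_simps)
  qed
  define i0 where "i0 = \<lfloor>(ph1 + th/2) / th\<rfloor>"
  have i01: "real_of_int i0 \<le> (ph1 + th/2) / th" "(ph1 + th/2) / th < real_of_int i0 + 1"
    unfolding i0_def by linarith+
  have i0pos: "0 \<le> i0" unfolding i0_def using a1 th by simp
  have "(ph1 + th/2) / th < real m"
  proof -
    have "(ph1 + th/2) < real m * th" using a2 th by simp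
    then show ?thesis using th by (simp add: field_simps)
  qed
  then have i0m: "i0 < int m" using i01(1) by linarith
  define i where "i = nat i0"
  have ii: "real i = real_of_int i0" using i0pos by (simp add: i_def)
  have im: "i < m" using i0m i0pos by (simp add: i_def)
  have r1: "(real i - 1/2) * th \<le> ph1"
  proof -
    have "real i * th \<le> ph1 + th/2" using i01(1) th ii by (simp add: field_simps)
    then show ?thesis by (simp add: algebra_simps)
  qed
  have r2: "ph1 < (real i + 1/2) * th"
  proof -
    have "ph1 + th/2 < (real i + 1) * th" using i01(2) th ii by (simp add: field_simps)
    then show ?thesis by (simp add: algebra_simps)
  qed
  have "sin ph1 = sin ph" "cos ph1 = cos ph" unfolding ph1_def by (rule sc_shift)+
  then show ?thesis using im r1 r2 unfolding th_def by blast
qed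

lemma bis_proj_polar:
  "bis_proj m p i (fst p + r * sin ps, snd p + r * cos ps) = r * cos (ps - real i * theta m)"
  unfolding bis_proj_def by (simp add: cos_diff algebra_simps)

lemma theta_le: "m \<ge> 7 \<Longrightarrow> theta m \<le> 2 * pi / 7"
  unfolding theta_def using pi_gt_zero by (intro divide_left_mono) auto

lemma one_step:
  assumes m7: "m \<ge> 7" and fin: "finite P" and pP: "p \<in> P" "q \<in> P" and i: "i < m" and R: "R > 0"
    and rng: "(real i - 1/2) * theta m \<le> ph" "ph < (real i + 1/2) * theta m"
    and near: "\<bar>ph - real i * theta m\<bar> \<le> theta m / 4"
    and q: "q = (fst p + R * sin ph, snd p + R * cos ph)"
  shows "\<exists>v. theta_arc m P p v \<and> v \<noteq> p \<and> dist p v + tc (theta m) * dist v q \<le> tc (theta m) * dist p q"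
proof -
  have th: "0 < theta m" "theta m \<le> 2 * pi / 7" using theta_pos theta_le m7 by auto
  have inq: "in_cone m p i q" unfolding in_cone_def using R rng q by blast
  define S where "S = {z \<in> P. in_cone m p i z}"
  have S: "finite S" "q \<in> S" using fin inq pP by (auto simp: S_def)
  define M where "M = Min (bis_proj m p i ` S)"
  have "M \<in> bis_proj m p i ` S" unfolding M_def using S by (intro Min_in) auto
  then obtain v where v: "v \<in> S" "bis_proj m p i v = M" by blast
  have minv: "\<forall>z\<in>S. bis_proj m p i v \<le> bis_proj m p i z" using v S unfolding M_def by auto
  have arc: "theta_arc m P p v" unfolding theta_arc_def using pP v minv i by (auto simp: S_def)
  from v(1) obtain r ps where rp: "r > 0" "(real i - 1/2) * theta m \<le> ps" "ps < (real i + 1/2) * theta m"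
    "v = (fst p + r * sin ps, snd p + r * cos ps)" unfolding S_def in_cone_def by blast
  have "bis_proj m p i v \<le> bis_proj m p i q" using minv S by auto
  then have proj: "r * cos (ps - real i * theta m) \<le> R * cos (ph - real i * theta m)"
    unfolding rp(4) q bis_proj_polar .
  have e1: "(real i - 1/2) * theta m = real i * theta m - theta m / 2"
    "(real i + 1/2) * theta m = real i * theta m + theta m / 2" by (simp_all add: algebra_simps)
  have psr: "\<bar>ps - real i * theta m\<bar> \<le> theta m / 2" using rp(2,3) unfolding e1 abs_le_iff by linarith
  have ineq: "dist p v + tc (theta m) * dist v q \<le> tc (theta m) * dist p q"
    by (rule step_ineq[OF th rp(1) R psr near proj rp(4) q])
  have "dist p v = r" unfolding rp(4) by (rule dist_polar0) (use rp in simp)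
  then have "v \<noteq> p" using rp by auto
  then show ?thesis using arc ineq by blast
qed

lemma choose_side:
  assumes m: "m = 2 * h + 1" "h \<ge> 1" and uw: "u \<noteq> w"
  shows "\<exists>i<m. \<exists>R>0. \<exists>ph. (real i - 1/2) * theta m \<le> ph \<and> ph < (real i + 1/2) * theta m \<and>
          \<bar>ph - real i * theta m\<bar> \<le> theta m / 4 \<and>
          (w = (fst u + R * sin ph, snd u + R * cos ph) \<or> u = (fst w + R * sin ph, snd w + R * cos ph))"
proof -
  have m0: "m > 0" using m by simp
  obtain R ph0 where R: "R > 0" "w = (fst u + R * sin ph0, snd u + R * cos ph0)"
    using polar_exists[OF uw] by blast
  obtain i ph where i: "i < m" "(real i - 1/2) * theta m \<le> ph" "ph < (real i + 1/2) * theta m"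
    "sin ph = sin ph0" "cos ph = cos ph0" using cone_of_angle[OF m0, of ph0] by blast
  have w: "w = (fst u + R * sin ph, snd u + R * cos ph)" using R i by simp
  define th where "th = theta m"
  have th: "th > 0" using theta_pos[OF m0] by (simp add: th_def)
  define d where "d = ph - real i * th"
  have dr: "- th / 2 \<le> d" "d < th / 2" using i(2,3) by (simp_all add: d_def th_def algebra_simps)
  have pieq: "pi = (real h + 1/2) * th"
  proof -
    have "real m * th = 2 * pi" using theta_mul[OF m0] by (simp add: th_def)
    then show ?thesis using m by (simp add: algebra_simps)
  qed
  consider "\<bar>d\<bar> \<le> th / 4" | "d > th / 4" | "d < - th / 4" by linarith
  then show ?thesis
  proof cases
    case 1
    then show ?thesis using i w R unfolding d_def th_def by blast
  next
    case 2
    define s where "s = i + h + 1"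
    define j where "j = s mod m"
    define n where "n = s div m"
    have jm: "j < m" using m0 by (simp add: j_def)
    have "s = j + m * n" unfolding j_def n_def by simp
    then have "real s = real j + real m * real n" by (metis of_nat_add of_nat_mult)
    then have "real j = real i + real h + 1 - real m * real n" by (simp add: s_def)
    then have "real j * th = (real i + real h + 1 - real m * real n) * th" by simp
    also have "\<dots> = real i * th + (real h + 1) * th - (real m * th) * real n" by (simp add: algebra_simps)
    finally have rj: "real j * th = real i * th + (real h + 1) * th - 2 * pi * real n"
      using theta_mul[OF m0] by (simp add: th_def)
    define ps where "ps = real j * th + d - th / 2"
    have ps: "ps = (ph + pi) - 2 * pi * real_of_int (int n)"
      unfolding ps_def rj d_def pieq by (simp add: algebra_simps)
    have sc: "sin ps = - sin ph" "cos ps = - cos ph" unfolding ps sc_shift by simp_all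
    have u: "u = (fst w + R * sin ps, snd w + R * cos ps)" using w sc by (simp add: prod_eq_iff)
    have r1: "(real j - 1/2) * th \<le> ps" "ps < (real j + 1/2) * th" "\<bar>ps - real j * th\<bar> \<le> th / 4"
      using 2 dr by (simp_all add: ps_def algebra_simps abs_le_iff)
    show ?thesis using jm R u r1 unfolding th_def by blast
  next
    case 3
    define s where "s = i + h"
    define j where "j = s mod m"
    define n where "n = s div m"
    have jm: "j < m" using m0 by (simp add: j_def)
    have "s = j + m * n" unfolding j_def n_def by simp
    then have "real s = real j + real m * real n" by (metis of_nat_add of_nat_mult)
    then have "real j = real i + real h - real m * real n" by (simp add: s_def)
    then have "real j * th = (real i + real h - real m * real n) * th" by simp
    also have "\<dots> = real i * th + real h * th - (real m * th) * real n" by (simp add: algebra_simps)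
    finally have rj: "real j * th = real i * th + real h * th - 2 * pi * real n"
      using theta_mul[OF m0] by (simp add: th_def)
    define ps where "ps = real j * th + d + th / 2"
    have ps: "ps = (ph + pi) - 2 * pi * real_of_int (int n)"
      unfolding ps_def rj d_def pieq by (simp add: algebra_simps)
    have sc: "sin ps = - sin ph" "cos ps = - cos ph" unfolding ps sc_shift by simp_all
    have u: "u = (fst w + R * sin ps, snd w + R * cos ps)" using w sc by (simp add: prod_eq_iff)
    have r1: "(real j - 1/2) * th \<le> ps" "ps < (real j + 1/2) * th" "\<bar>ps - real j * th\<bar> \<le> th / 4"
      using 3 dr by (simp_all add: ps_def algebra_simps abs_le_iff)
    show ?thesis using jm R u r1 unfolding th_def by blast
  qed
qed

lemma wk_Cons: "ys \<noteq> [] \<Longrightarrow> wk H (x # ys) = (H x (hd ys) \<and> wk H ys)"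
  by (cases ys) auto

lemma wl_Cons: "ys \<noteq> [] \<Longrightarrow> wl (x # ys) = dist x (hd ys) + wl ys"
  by (cases ys) auto

theorem mainTheorem13:
  fixes k m :: nat and P :: "(real \<times> real) set"
  assumes "k \<ge> 1" and "m = 4 * k + 3 \<or> m = 4 * k + 5"
    and "finite P" and "general_position m P"
  shows "is_spanner (theta_graph m P) P
           (cos (theta m / 4) / (cos (theta m / 2) - sin (3 * theta m / 4)))"
proof -
  define t where "t = tc (theta m)"
  have tdef: "cos (theta m / 4) / (cos (theta m / 2) - sin (3 * theta m / 4)) = t"
    by (simp add: t_def tc_def)
  have m7: "m \<ge> 7" using assms(1,2) by auto
  obtain h where h: "m = 2 * h + 1" "h \<ge> 1"
  proof (cases "m = 4 * k + 3")
    case True then show ?thesis using that[of "2 * k + 1"] by simp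
  next
    case False then have "m = 4 * k + 5" using assms(2) by simp
    then show ?thesis using that[of "2 * k + 2"] by simp
  qed
  have t1: "t \<ge> 1" unfolding t_def using tc_facts(2)[OF theta_pos theta_le[OF m7]] m7 by simp
  define H where "H = theta_graph m P"
  define G where "G = (\<lambda>(u::point) (w::point). \<exists>xs. xs \<noteq> [] \<and> hd xs = u \<and> last xs = w \<and> wk H xs \<and> wl xs \<le> t * dist u w)"
  define F where "F = (\<lambda>(u::point) (w::point). {x \<in> P \<times> P. dist (fst x) (snd x) < dist u w})"
  have finF: "finite (F u w)" for u w unfolding F_def using assms(3) by simp
  have main: "\<forall>u w. u \<in> P \<longrightarrow> w \<in> P \<longrightarrow> card (F u w) = n \<longrightarrow> G u w" for n
  proof (induction n rule: less_induct)
    case (less n)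
    show ?case
    proof (intro allI impI)
      fix u w assume uP: "u \<in> P" and wP: "w \<in> P" and cn: "card (F u w) = n"
      have IH: "G a b" if ab: "a \<in> P" "b \<in> P" "dist a b < dist u w" for a b
      proof -
        have "F a b \<subset> F u w"
        proof
          show "F a b \<subseteq> F u w" using ab by (auto simp: F_def)
          have "(a, b) \<in> F u w" "(a, b) \<notin> F a b" using ab by (auto simp: F_def)
          then show "F a b \<noteq> F u w" by blast
        qed
        then have "card (F a b) < n" using psubset_card_mono[OF finF] cn by blast
        then show ?thesis using less.IH ab by blast
      qed
      show "G u w"
      proof (cases "u = w")
        case True
        then show ?thesis unfolding G_def by (intro exI[of _ "[u]"]) simp
      next
        case False
        obtain i R ph where ch: "i < m" "R > 0" "(real i - 1/2) * theta m \<le> ph" "ph < (real i + 1/2) * theta m"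
          "\<bar>ph - real i * theta m\<bar> \<le> theta m / 4"
          "w = (fst u + R * sin ph, snd u + R * cos ph) \<or> u = (fst w + R * sin ph, snd w + R * cos ph)"
          using choose_side[OF h False] by blast
        from ch(6) show ?thesis
        proof
          assume wq: "w = (fst u + R * sin ph, snd u + R * cos ph)"
          obtain v where v: "theta_arc m P u v" "v \<noteq> u" "dist u v + t * dist v w \<le> t * dist u w"
            using one_step[OF m7 assms(3) uP wP ch(1,2,3,4,5) wq] unfolding t_def by blast
          have vP: "v \<in> P" using v(1) by (simp add: theta_arc_def)
          have "dist u v > 0" using v(2) by simp
          then have "t * dist v w < t * dist u w" using v(3) by linarith
          then have "dist v w < dist u w" using t1 by simp
          then obtain ys where ys: "ys \<noteq> []" "hd ys = v" "last ys = w" "wk H ys" "wl ys \<le> t * dist v w"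
            using IH[OF vP wP] unfolding G_def by blast
          have "H u v" using v(1) by (simp add: H_def theta_graph_def)
          then have "wk H (u # ys)" using ys by (simp add: wk_Cons)
          moreover have "wl (u # ys) \<le> t * dist u w" using ys v(3) by (simp add: wl_Cons)
          ultimately show ?thesis using ys unfolding G_def by (intro exI[of _ "u # ys"]) simp
        next
          assume uq: "u = (fst w + R * sin ph, snd w + R * cos ph)"
          obtain z where z: "theta_arc m P w z" "z \<noteq> w" "dist w z + t * dist z u \<le> t * dist w u"
            using one_step[OF m7 assms(3) wP uP ch(1,2,3,4,5) uq] unfolding t_def by blast
          have zP: "z \<in> P" using z(1) by (simp add: theta_arc_def)
          have "dist w z > 0" using z(2) by simp
          then have "t * dist z u < t * dist w u" using z(3) by linarith
          then have "dist u z < dist u w" using t1 by (simp add: dist_commute)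
          then obtain ys where ys: "ys \<noteq> []" "hd ys = u" "last ys = z" "wk H ys" "wl ys \<le> t * dist u z"
            using IH[OF uP zP] unfolding G_def by blast
          have "H z w" using z(1) by (simp add: H_def theta_graph_def)
          then have "wk H (ys @ [w])" using ys by (intro wk_snoc) auto
          moreover have "wl (ys @ [w]) \<le> t * dist u w"
            using ys z(3) by (simp add: wl_snoc dist_commute)
          ultimately show ?thesis using ys unfolding G_def by (intro exI[of _ "ys @ [w]"]) simp
        qed
      qed
    qed
  qed
  show ?thesis
    unfolding is_spanner_def tdef
  proof (intro ballI)
    fix u w assume "u \<in> P" "w \<in> P"
    then have "G u w" using main by blast
    then obtain xs where "xs \<noteq> []" "hd xs = u" "last xs = w" "wk H xs" "wl xs \<le> t * dist u w"
      unfolding G_def by blast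
    show "\<exists>xs. xs \<noteq> [] \<and> hd xs = u \<and> last xs = w \<and>
        (\<forall>j<length xs - 1. theta_graph m P (xs ! j) (xs ! Suc j)) \<and>
        (\<Sum>j<length xs - 1. dist (xs ! j) (xs ! Suc j)) \<le> t * dist u w"
    proof (intro exI[of _ xs] conjI)
      show "\<forall>j<length xs - 1. theta_graph m P (xs ! j) (xs ! Suc j)"
        using wk_iff[of H xs] \<open>wk H xs\<close> by (simp add: H_def)
      show "(\<Sum>j<length xs - 1. dist (xs ! j) (xs ! Suc j)) \<le> t * dist u w"
        using wl_eq[of xs] \<open>wl xs \<le> t * dist u w\<close> by simp
    qed fact+
  qed
qed

end
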